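(* For $p=1$ and any $N\ge 1$ and $d\in\mathbb{R}$, the characteristic polynomial of $\mathbf{M}^{-1}\mathbf{K}$ is $$\det\bigl(\lambda I-\mathbf{M}^{-1}\mathbf{K}\bigr)=\bigl(\lambda^2+4\lambda+6\bigr)^{N-1}\bigl(\lambda^2-6\lambda d+4\lambda+6\bigr).$$
   Context: Setting: the linear advection equation $\partial_t u+\partial_x u=s(x)$ (velocity $1$) with a Dirichlet condition $u=u_D$ at the left physical boundary $\bar x$. Uniform mesh of cells $\Omega_e=[x_{e-1/2},x_{e+1/2}]$, $e=1,\dots,N$, with $x_{1/2}=0$ and cell size $\Delta x=1$. On each cell the approximation space is $\mathbb{P}^p(\Omega_e)$ with basis $\{\phi^e_j\}_{j=0}^p$, where $\phi^e_j(x)=\phi_j(x-(e-1))$ are translates of a fixed basis $\{\phi_j\}$ of $\mathbb{P}^p$ on $[0,1]$. Local matrices (indices $i,j=0,\dots,p$, identical for all cells by translation): mass $M_{ij}=\int_{\Omega_e}\phi^e_i\phi^e_j\,dx$; stiffness $K^s_{ij}=\int_{\Omega_e}\partial_x\phi^e_i\,\phi^e_j\,dx$; right interface $K^R_{ij}=\phi^e_i(x_{e+1/2})\phi^e_j(x_{e+1/2})$; left interface coupling $(K^L)_{ij}=\phi^e_i(x_{e-1/2})\phi^{e-1}_j(x_{e-1/2})$. The physical boundary is at $\bar x = x_{1/2}+d$, with $d\in[-1,1]$ ($d<0$: outside the first cell, $d>0$: inside). Shifted boundary polynomial correction with homogeneous data $u_D=0$: the upwind flux at $x_{1/2}$ is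 $u^\star=-\bigl(u_h(x_{1/2}+d)-u_h(x_{1/2})\bigr)$, with $u_h$ the (polynomially extended) solution of cell 1, giving the matrix $K^{SB}_{ij}=-\phi^1_i(x_{1/2})\bigl(\phi^1_j(x_{1/2}+d)-\phi^1_j(x_{1/2})\bigr)$. The semi-discrete system is $\mathbf{M}\,\frac{d\mathbf{U}}{dt}=\mathbf{K}\mathbf{U}$ with $\mathbf{U}=(\mathbf{u}_1,\dots,\mathbf{u}_N)$ the modal coefficient vectors, $\mathbf{M}=\mathrm{diag}(M,\dots,M)$, and $\mathbf{K}$ block lower bidiagonal with diagonal blocks $K^s-K^R+K^{SB}$ (cell 1) and $K^s-K^R$ (cells $2,\dots,N$), subdiagonal blocks $K^L$, all other blocks zero. *)

theory Defs
  imports "HOL-Analysis.Analysis" "HOL-Computational_Algebra.Polynomial"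
    "Jordan_Normal_Form.Char_Poly" "Jordan_Normal_Form.Gauss_Jordan_Elimination"
begin

text \<open>The cell basis is phi^e_j(x) = phi_j(x - (e-1)); cells e = 1..N are indexed
  0-based below as c = e - 1, so cell c is [c, c+1].\<close>

definition cell_basis :: "(nat \<Rightarrow> real poly) \<Rightarrow> nat \<Rightarrow> nat \<Rightarrow> real \<Rightarrow> real" where
  "cell_basis phi e j x = poly (phi j) (x - (real e - 1))"

definition cell_basis_dx :: "(nat \<Rightarrow> real poly) \<Rightarrow> nat \<Rightarrow> nat \<Rightarrow> real \<Rightarrow> real" where
  "cell_basis_dx phi e j x = poly (pderiv (phi j)) (x - (real e - 1))"

text \<open>Local matrices, computed on cell e = 1 (identical for all cells by translation).\<close>

definition massM :: "(nat \<Rightarrow> real poly) \<Rightarrow> nat \<Rightarrow> nat \<Rightarrow> real" where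
  "massM phi i j = integral {0..1} (\<lambda>x. cell_basis phi 1 i x * cell_basis phi 1 j x)"

definition stiffK :: "(nat \<Rightarrow> real poly) \<Rightarrow> nat \<Rightarrow> nat \<Rightarrow> real" where
  "stiffK phi i j = integral {0..1} (\<lambda>x. cell_basis_dx phi 1 i x * cell_basis phi 1 j x)"

definition KR :: "(nat \<Rightarrow> real poly) \<Rightarrow> nat \<Rightarrow> nat \<Rightarrow> real" where
  "KR phi i j = cell_basis phi 1 i 1 * cell_basis phi 1 j 1"

text \<open>Left coupling for cell e = 2: phi^2_i(x_{3/2}) * phi^1_j(x_{3/2}), with x_{3/2} = 1.\<close>
definition KL :: "(nat \<Rightarrow> real poly) \<Rightarrow> nat \<Rightarrow> nat \<Rightarrow> real" where
  "KL phi i j = cell_basis phi 2 i 1 * cell_basis phi 1 j 1"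

text \<open>Shifted boundary matrix; x_{1/2} = 0.\<close>
definition KSB :: "(nat \<Rightarrow> real poly) \<Rightarrow> real \<Rightarrow> nat \<Rightarrow> nat \<Rightarrow> real" where
  "KSB phi d i j = - cell_basis phi 1 i 0 * (cell_basis phi 1 j (0 + d) - cell_basis phi 1 j 0)"

text \<open>Global block matrices (block size p+1) for N cells; global index k corresponds to
  cell k div (p+1) (0-based) and local index k mod (p+1).\<close>

definition globalM :: "nat \<Rightarrow> (nat \<Rightarrow> real poly) \<Rightarrow> nat \<Rightarrow> real mat" where
  "globalM p phi N = mat (N * (p+1)) (N * (p+1)) (\<lambda>(r, c).
     if r div (p+1) = c div (p+1) then massM phi (r mod (p+1)) (c mod (p+1)) else 0)"

definition globalK :: "nat \<Rightarrow> (nat \<Rightarrow> real poly) \<Rightarrow> real \<Rightarrow> nat \<Rightarrow> real mat" where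
  "globalK p phi d N = mat (N * (p+1)) (N * (p+1)) (\<lambda>(r, c).
     let er = r div (p+1); ec = c div (p+1); i = r mod (p+1); j = c mod (p+1) in
     if er = ec then
        stiffK phi i j - KR phi i j + (if er = 0 then KSB phi d i j else 0)
     else if er = ec + 1 then KL phi i j
     else 0)"

definition is_Pp_basis :: "nat \<Rightarrow> (nat \<Rightarrow> real poly) \<Rightarrow> bool" where
  "is_Pp_basis p phi \<longleftrightarrow> (\<forall>j\<le>p. degree (phi j) \<le> p) \<and>
     (\<forall>c :: nat \<Rightarrow> real. (\<Sum>j\<le>p. Polynomial.smult (c j) (phi j)) = 0 \<longrightarrow> (\<forall>j\<le>p. c j = 0))"

end

theory Submission
  imports Defs
begin

lemma det2: "det (mat 2 2 f) = f (0,0) * f (1,1) - f (0,1) * (f (1,0) :: 'a :: comm_ring_1)"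
proof -
  have "det (mat 2 2 f) = (\<Sum>j<2. mat 2 2 f $$ (0, j) * cofactor (mat 2 2 f) 0 j)"
    by (rule laplace_expansion_row[of _ 2]) auto
  also have "\<dots> = f (0,0) * f (1,1) - f (0,1) * (f (1,0) :: 'a :: comm_ring_1)"
    by (simp add: eval_nat_numeral cofactor_def det_single mat_delete_def)
  finally show ?thesis .
qed

definition BM :: "nat \<Rightarrow> (nat\<Rightarrow>nat\<Rightarrow>'a::zero) \<Rightarrow> (nat\<Rightarrow>nat\<Rightarrow>'a) \<Rightarrow> (nat\<Rightarrow>nat\<Rightarrow>'a) \<Rightarrow> 'a mat" where
"BM N B0 B C = mat (N*2) (N*2) (\<lambda>(r,c). if r div 2 = c div 2 then (if r div 2 = 0 then B0 (r mod 2) (c mod 2) else B (r mod 2) (c mod 2)) else if r div 2 = c div 2 + 1 then C (r mod 2) (c mod 2) else 0)"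

definition dt2 :: "(nat\<Rightarrow>nat\<Rightarrow>'a::comm_ring_1) \<Rightarrow> 'a" where
"dt2 B = B 0 0 * B 1 1 - B 0 1 * B 1 0"

lemma BM_split: "BM (Suc N) B0 B C = four_block_mat (mat 2 2 (\<lambda>(i,j). B0 i j)) (0\<^sub>m 2 (N*2))
   (mat (N*2) 2 (\<lambda>(r,c). if r < 2 then C r c else 0)) (BM N B B C)"
proof (rule eq_matI)
  fix i j assume i: "i < dim_row (four_block_mat (mat 2 2 (\<lambda>(i,j). B0 i j)) (0\<^sub>m 2 (N*2))
   (mat (N*2) 2 (\<lambda>(r,c). if r < 2 then C r c else 0)) (BM N B B C))"
    and j: "j < dim_col (four_block_mat (mat 2 2 (\<lambda>(i,j). B0 i j)) (0\<^sub>m 2 (N*2))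
   (mat (N*2) 2 (\<lambda>(r,c). if r < 2 then C r c else 0)) (BM N B B C))"
  have i': "i < 2 + N*2" and j': "j < 2 + N*2" using i j by (auto simp: BM_def)
  have d: "\<And>r::nat. r \<ge> 2 \<Longrightarrow> (r - 2) div 2 = r div 2 - 1 \<and> (r-2) mod 2 = r mod 2"
    by (metis Suc_1 add_diff_cancel_right' div_add_self2 le_add_diff_inverse2 mod_add_self2 zero_neq_numeral)
  show "BM (Suc N) B0 B C $$ (i, j) = four_block_mat (mat 2 2 (\<lambda>(i,j). B0 i j)) (0\<^sub>m 2 (N*2))
   (mat (N*2) 2 (\<lambda>(r,c). if r < 2 then C r c else 0)) (BM N B B C) $$ (i, j)"
  proof (cases "i < 2")
    case True
    have "i div 2 = 0" "i mod 2 = i" using True by auto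
    moreover have "(j div 2 = 0) = (j < 2)" "j < 2 \<Longrightarrow> j mod 2 = j" by auto
    ultimately show ?thesis using i' j' True by (auto simp: BM_def)
  next
    case False
    note iF = False
    show ?thesis
    proof (cases "j < 2")
      case True
      have "j div 2 = 0" "j mod 2 = j" using True by auto
      moreover have "i div 2 \<noteq> 0" using iF by auto
      moreover have "(i div 2 = 1) = (i - 2 < 2)" using iF by auto
      moreover have "i mod 2 = i - 2" if "i - 2 < 2" using iF that by presburger
      ultimately show ?thesis using i' j' iF True by (auto simp: BM_def)
    next
      case False
      obtain i0 j0 where ij: "i = i0 + 2" "j = j0 + 2" using iF False
        by (metis add.commute le_Suc_ex not_less)
      have e: "i div 2 = i0 div 2 + 1" "j div 2 = j0 div 2 + 1" "i mod 2 = i0 mod 2" "j mod 2 = j0 mod 2"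
        using ij by auto
      show ?thesis using i' j' ij by (simp add: BM_def e)
    qed
  qed
qed (auto simp: BM_def)

lemma det_BM_step: "det (BM (Suc N) B0 B C) = dt2 B0 * det (BM N B B (C::nat\<Rightarrow>nat\<Rightarrow>'a::idom))"
proof -
  have "det (BM (Suc N) B0 B C) = det (mat 2 2 (\<lambda>(i,j). B0 i j)) * det (BM N B B C)"
    unfolding BM_split
    by (rule det_four_block_mat_upper_right_zero[of _ 2 _ "N*2"]) (auto simp: BM_def)
  then show ?thesis by (simp add: det2 dt2_def)
qed

lemma det_BM: "det (BM (Suc N) B0 B C) = dt2 B0 * dt2 B ^ N * (1::'a::idom)"
proof (induction N arbitrary: B0)
  case 0
  have "det (BM 0 B B C) = 1" by (simp add: BM_def det_def)
  then show ?case by (simp add: det_BM_step)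
next
  case (Suc N)
  then show ?case by (simp add: det_BM_step)
qed

declare One_nat_def[simp del]

lemma deg1: "degree (p::real poly) \<le> 1 \<Longrightarrow> p = [:coeff p 0, coeff p 1:]"
  by (rule poly_eqI) (auto simp: coeff_pCons coeff_eq_0 One_nat_def split: nat.split)

lemma int01: "integral {0..1} (\<lambda>x::real. (a + x*b)*(c + x*e)) = a*c + (a*e+b*c)/2 + b*e/3"
proof -
  let ?F = "\<lambda>x::real. a*c*x + (a*e+b*c)*x^2/2 + b*e*x^3/3"
  have "((\<lambda>x. (a + x*b)*(c + x*e)) has_integral (?F 1 - ?F 0)) {0..1}"
  proof (rule fundamental_theorem_of_calculus)
    fix x :: real assume "x \<in> {0..1}"
    have "(?F has_real_derivative (a + x*b)*(c + x*e)) (at x within {0..1})"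
      by (auto intro!: derivative_eq_intros simp: algebra_simps power2_eq_square)
    then show "(?F has_vector_derivative (a + x*b)*(c + x*e)) (at x within {0..1})"
      by (simp add: has_real_derivative_iff_has_vector_derivative)
  qed simp
  then show ?thesis by (simp add: integral_unique)
qed

lemma entries:
  assumes "phi i = [:ai, bi:]" "phi j = [:aj, bj:]"
  shows "massM phi i j = ai*aj + (ai*bj+bi*aj)/2 + bi*bj/3"
    "stiffK phi i j = bi*aj + bi*bj/2"
    "KR phi i j = (ai+bi)*(aj+bj)"
    "KL phi i j = ai*(aj+bj)"
    "KSB phi d i j = - ai*bj*d"
proof -
  show "massM phi i j = ai*aj + (ai*bj+bi*aj)/2 + bi*bj/3"
    unfolding massM_def cell_basis_def using int01[of ai bi aj bj] assms by simp
  have "stiffK phi i j = integral {0..1} (\<lambda>x::real. (bi + x*0)*(aj + x*bj))"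
    unfolding stiffK_def cell_basis_def cell_basis_dx_def using assms by (simp add: pderiv_pCons)
  then show "stiffK phi i j = bi*aj + bi*bj/2" using int01[of bi 0 aj bj] by simp
  show "KR phi i j = (ai+bi)*(aj+bj)" "KL phi i j = ai*(aj+bj)" "KSB phi d i j = - ai*bj*d"
    unfolding KR_def KL_def KSB_def cell_basis_def using assms by (simp_all add: algebra_simps)
qed

lemma algid:
  fixes p q r s t :: real
  defines "M \<equiv> \<lambda>ai bi aj bj. ai*aj + (ai*bj+bi*aj)/2 + bi*bj/3"
    and "D \<equiv> \<lambda>ai bi aj bj. (bi*aj + bi*bj/2) - (ai+bi)*(aj+bj) - ai*bj*t"
  shows "[:- D p q p q, M p q p q:] * [:- D r s r s, M r s r s:]
       - [:- D p q r s, M p q r s:] * [:- D r s p q, M r s p q:]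
      = [: M p q p q * M r s r s - M p q r s * M r s p q :] * [:6, 4 - 6*t, 1:]"
  unfolding M_def D_def by (simp add: algebra_simps) (simp add: field_simps; algebra)

lemma sum2: "(\<Sum>j\<le>(1::nat). f j) = f 0 + f 1"
  using sum.atMost_Suc[of f 0] by (simp add: One_nat_def)

lemma basis_coeffs:
  assumes "is_Pp_basis 1 phi"
  obtains a0 b0 a1 b1 where "phi 0 = [:a0,b0:]" "phi 1 = [:a1,b1:]" "a0*b1 - a1*b0 \<noteq> 0"
proof -
  have deg: "degree (phi 0) \<le> 1" "degree (phi 1) \<le> 1" using assms unfolding is_Pp_basis_def by auto
  define a0 where "a0 = coeff (phi 0) 0"
  define b0 where "b0 = coeff (phi 0) 1"
  define a1 where "a1 = coeff (phi 1) 0"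
  define b1 where "b1 = coeff (phi 1) 1"
  have p: "phi 0 = [:a0,b0:]" "phi 1 = [:a1,b1:]"
    using deg1[OF deg(1)] deg1[OF deg(2)] unfolding a0_def b0_def a1_def b1_def by simp_all
  have li: "\<forall>c. (\<Sum>j\<le>1. Polynomial.smult (c j) (phi j)) = 0 \<longrightarrow> (\<forall>j\<le>1. c j = 0)"
    using assms unfolding is_Pp_basis_def by blast
  have li': "c0 = 0 \<and> c1 = 0" if h: "Polynomial.smult c0 (phi 0) + Polynomial.smult c1 (phi 1) = 0" for c0 c1
  proof -
    have "(\<Sum>j\<le>1. Polynomial.smult ((\<lambda>j::nat. if j=0 then c0 else c1) j) (phi j)) = 0"
      using h by (simp add: sum2)
    from li[rule_format, OF this] have q: "\<And>j::nat. j \<le> 1 \<Longrightarrow> (if j = 0 then c0 else c1) = 0" .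
    show ?thesis using q[of 0] q[of 1] by simp
  qed
  have "a0*b1 - a1*b0 \<noteq> 0"
  proof
    assume h: "a0*b1 - a1*b0 = 0"
    show False
    proof (cases "b0 = 0 \<and> b1 = 0")
      case True
      show False
      proof (cases "a0 = 0 \<and> a1 = 0")
        case True2: True
        have c: "Polynomial.smult 1 (phi 0) + Polynomial.smult 0 (phi 1) = 0"
          using True True2 by (simp add: p)
        then show False using li'[OF c] by simp
      next
        case False2: False
        have c: "Polynomial.smult a1 (phi 0) + Polynomial.smult (-a0) (phi 1) = 0"
          using True by (simp add: p algebra_simps)
        then show False using li'[OF c] False2 by simp
      qed
    next
      case False
      have c: "Polynomial.smult b1 (phi 0) + Polynomial.smult (-b0) (phi 1) = 0"
        using h by (simp add: p algebra_simps)
      then show False using li'[OF c] False by simp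
    qed
  qed
  then show ?thesis using that p by blast
qed

theorem mainTheorem2:
  fixes phi :: "nat \<Rightarrow> real poly" and N :: nat and d :: real
  assumes "is_Pp_basis 1 phi" and "N \<ge> 1"
  shows "char_poly (the (mat_inverse (globalM 1 phi N)) * globalK 1 phi d N)
           = [:6, 4, 1:] ^ (N - 1) * [:6, 4 - 6 * d, 1:]"
proof -
  obtain a0 b0 a1 b1 where p0: "phi 0 = [:a0,b0:]" and p1: "phi 1 = [:a1,b1:]" and nz: "a0*b1 - a1*b0 \<noteq> 0"
    using basis_coeffs[OF assms(1)] by blast
  obtain N' where N: "N = Suc N'" using assms(2) by (cases N) auto
  define n where "n = N*2"
  define Mf where "Mf = massM phi"
  define D where "D = (\<lambda>i j. stiffK phi i j - KR phi i j)"
  define D0 where "D0 = (\<lambda>i j. D i j + KSB phi d i j)"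
  let ?G = "globalM 1 phi N"
  let ?K = "globalK 1 phi d N"
  have G: "?G = BM N Mf Mf (\<lambda>_ _. 0)"
    unfolding globalM_def BM_def Mf_def one_add_one by (rule eq_matI) auto
  have K: "?K = BM N D0 D (KL phi)"
    unfolding globalK_def BM_def D0_def D_def one_add_one by (rule eq_matI) (auto simp: Let_def)
  define m where "m = dt2 Mf"
  have m: "m = (a0*b1 - a1*b0)^2/12"
    unfolding m_def dt2_def Mf_def entries[of phi 0 a0 b0 0 a0 b0, OF p0 p0] entries[of phi 0 a0 b0 1 a1 b1, OF p0 p1] entries[of phi 1 a1 b1 0 a0 b0, OF p1 p0] entries[of phi 1 a1 b1 1 a1 b1, OF p1 p1]
    by (simp add: field_simps power2_eq_square) algebra
  have mnz: "m \<noteq> 0" using nz unfolding m by simp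
  have detG: "det ?G = m ^ N" unfolding G unfolding N using det_BM[of N' Mf Mf] by (simp add: m_def)
  have Gc: "?G \<in> carrier_mat n n" unfolding G by (simp add: BM_def n_def)
  have Kc: "?K \<in> carrier_mat n n" unfolding K by (simp add: BM_def n_def)
  have "?G \<in> Units (ring_mat TYPE(real) n undefined)"
    by (rule det_non_zero_imp_unit[OF Gc]) (simp add: detG mnz)
  then obtain Gi where inv: "mat_inverse ?G = Some Gi" using mat_inverse(1)[OF Gc, where b=undefined] by (cases "mat_inverse ?G") auto
  have GGi: "?G * Gi = 1\<^sub>m n" "Gi \<in> carrier_mat n n" using mat_inverse(2)[OF Gc inv] by auto
  define A where "A = Gi * ?K"
  have Ac: "A \<in> carrier_mat n n" using GGi Kc by (simp add: A_def)
  have GA: "?G * A = ?K" unfolding A_def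
    using assoc_mult_mat[OF Gc GGi(2) Kc, symmetric] GGi Kc by simp
  interpret h: comm_ring_hom "\<lambda>a::real. [:a:]"
    by unfold_locales (auto simp: one_pCons)
  define PB where "PB = BM N (\<lambda>i j. [:-D0 i j, Mf i j:]) (\<lambda>i j. [:-D i j, Mf i j:]) (\<lambda>i j. [:-KL phi i j:])"
  have cpm: "char_poly_matrix A = [:0,1:] \<cdot>\<^sub>m 1\<^sub>m n + map_mat (\<lambda>a. [:a:]) ((-1) \<cdot>\<^sub>m A)"
    unfolding char_poly_matrix_def using Ac by (intro eq_matI) auto
  have "map_mat (\<lambda>a. [:a:]) ?G * char_poly_matrix A
     = map_mat (\<lambda>a. [:a:]) ?G * ([:0,1:] \<cdot>\<^sub>m 1\<^sub>m n) + map_mat (\<lambda>a. [:a:]) ?G * map_mat (\<lambda>a. [:a:]) ((-1) \<cdot>\<^sub>m A)"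
    unfolding cpm using Gc Ac by (intro mult_add_distrib_mat) auto
  also have "map_mat (\<lambda>a. [:a:]) ?G * ([:0,1:] \<cdot>\<^sub>m 1\<^sub>m n) = [:0,1:] \<cdot>\<^sub>m map_mat (\<lambda>a. [:a:]) ?G"
    using Gc by (subst mult_smult_distrib[of _ n n]) auto
  also have "map_mat (\<lambda>a. [:a:]) ?G * map_mat (\<lambda>a. [:a:]) ((-1) \<cdot>\<^sub>m A) = map_mat (\<lambda>a. [:a:]) (?G * ((-1) \<cdot>\<^sub>m A))"
    using Gc Ac by (intro h.mat_hom_mult[symmetric]) auto
  also have "?G * ((-1) \<cdot>\<^sub>m A) = (-1) \<cdot>\<^sub>m ?K"
    using Gc Ac GA by (subst mult_smult_distrib[of _ n n]) auto
  also have "[:0,1:] \<cdot>\<^sub>m map_mat (\<lambda>a. [:a:]) ?G + map_mat (\<lambda>a. [:a:]) ((-1) \<cdot>\<^sub>m ?K) = PB"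
    unfolding PB_def G K by (rule eq_matI) (auto simp: BM_def)
  finally have key: "map_mat (\<lambda>a. [:a:]) ?G * char_poly_matrix A = PB" .
  have "det (map_mat (\<lambda>a. [:a:]) ?G * char_poly_matrix A) = det (map_mat (\<lambda>a. [:a:]) ?G) * char_poly A"
    unfolding char_poly_def using Gc Ac by (intro det_mult) auto
  also have "det (map_mat (\<lambda>a. [:a:]) ?G) = [:m ^ N:]" using detG by simp
  finally have eq1: "[:m ^ N:] * char_poly A = det PB" using key by simp
  have dP: "dt2 (\<lambda>i j. [:-D i j, Mf i j:]) = [:m:] * [:6, 4, 1:]"
    using algid[where p=a0 and q=b0 and r=a1 and s=b1 and t=0]
    unfolding dt2_def m_def D_def Mf_def entries[of phi 0 a0 b0 0 a0 b0, OF p0 p0] entries[of phi 0 a0 b0 1 a1 b1, OF p0 p1] entries[of phi 1 a1 b1 0 a0 b0, OF p1 p0] entries[of phi 1 a1 b1 1 a1 b1, OF p1 p1]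
    by simp
  have dP0: "dt2 (\<lambda>i j. [:-D0 i j, Mf i j:]) = [:m:] * [:6, 4 - 6 * d, 1:]"
    using algid[where p=a0 and q=b0 and r=a1 and s=b1 and t=d]
    unfolding dt2_def m_def D0_def D_def Mf_def entries[of phi 0 a0 b0 0 a0 b0, OF p0 p0] entries[of phi 0 a0 b0 1 a1 b1, OF p0 p1] entries[of phi 1 a1 b1 0 a0 b0, OF p1 p0] entries[of phi 1 a1 b1 1 a1 b1, OF p1 p1]
    by (simp add: algebra_simps)
  have "det PB = [:m:] * [:6, 4 - 6 * d, 1:] * ([:m:] * [:6, 4, 1:]) ^ N'"
    unfolding PB_def N det_BM dP dP0 by (simp only: mult_1_right)
  also have "\<dots> = [:m ^ N:] * ([:6, 4, 1:] ^ (N - 1) * [:6, 4 - 6 * d, 1:])"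
    unfolding N diff_Suc_1 unfolding h.hom_power unfolding power_mult_distrib power_Suc by (simp only: mult_ac)
  finally have eqf: "[:m ^ N:] * char_poly A = [:m ^ N:] * ([:6, 4, 1:] ^ (N - 1) * [:6, 4 - 6 * d, 1:])"
    using eq1 by simp
  have ne: "[:m ^ N:] \<noteq> 0" using mnz by simp
  have "char_poly A = [:6, 4, 1:] ^ (N - 1) * [:6, 4 - 6 * d, 1:]"
    using iffD1[OF mult_left_cancel[OF ne] eqf] .
  then show ?thesis using inv by (simp add: A_def)
qed

end
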